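(* In the protocol IT-HS described in the context, with $f<\frac{n}{3}$ Byzantine parties, let $lock>0$ be some nonfaulty party's $lock$ variable and $lock\_val$ its value. If some nonfaulty party has either $prev\_key2\ge lock$, or $key2\ge lock$ and $key2\_val\neq lock\_val$, then there exist $f+1$ nonfaulty parties whose $key1$, $key1\_val$ and $prev\_key1$ fields support opening the pair $(lock,lock\_val)$.
   Context: Model. $n$ parties with inputs $x_i$; up to $f$ Byzantine (arbitrary behaviour), the rest nonfaulty; authenticated point-to-point channels; partial synchrony: after an unknown time GST every message arrives within known $\Delta$ time and clocks are synchronized, before GST delays are arbitrary but finite. Support: fields $(key1,key1\_val,prev\_key1)=(k,w,pk)$ (as carried in a $proof$ message) support opening a pair $(L,V)$ if $L\le pk$, or $L\le k$ and $w\neq V$. Protocol IT-HS (party $i$). Variables: $lock\gets 0$, $lock\_val\gets x_i$; $key3\gets 0$, $key3\_val\gets x_i$; $key2\gets 0$, $key2\_val\gets x_i$, $prev\_key2\gets -1$; $key1\gets 0$, $key1\_val\gets x_i$, $prev\_key1\gets -1$; $view\gets 0$; $highest\_request[j]\gets 0$, $highest\_abort[j]\gets 0$ for $j\in[n]$. "Send-upon-join $m$": for each $j$, send $m$ to $j$ as soon as $highest\_request[j]$ equals the current view. Background: (B1) on $\langle request,v\rangle$ from $j$, $highest\_request[j]\gets\max(highest\_request[j],v)$. (B2) on $\langle done,val\rangle$ from $f+1$ parties with the same $val$: if no $done$ sent yet, send $\langle done,val\rangle$ to all. (B3) on $\langle done,val\rangle$ from $n-f$ parties with the same $val$: decide $val$,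 terminate. (B4) on $\langle abort,v\rangle$ from $j$ with $highest\_abort[j]<v$: $highest\_abort[j]\gets v$; $u\gets$ the $(f+1)$-th largest entry of $highest\_abort$; if $u>highest\_abort[i]$ send $\langle abort,u\rangle$ to all and set $highest\_abort[i]\gets u$; $w\gets$ the $(n-f)$-th largest entry; if $w\ge view$ set $view\gets w+1$. Views: for each value $v$ of $view$, while $view=v$: fresh per-view state; after $11\Delta$ local time send $\langle abort,v\rangle$ to all; ignore other views' messages except $abort$, $done$, $request$; primary $p=(v\bmod n)+1$. View change: send $\langle request,v\rangle$ to all; when $highest\_request[p]=v$ send $\langle suggest,key3,key3\_val,key2,key2\_val,prev\_key2,v\rangle$ to $p$; send-upon-join $\langle proof,key1,key1\_val,prev\_key1,v\rangle$. If $i=p$: upon first $\langle suggest,k3,v3,k2,v2,pk2,v\rangle$ from a party, if $pk2<k2<v$ add $(k2,v2,pk2)$ to $key2\_proofs$; if $k3=0$ add $(k3,v3)$ to $suggestions$; else if $k3<v$ add $(k3,v3)$ as soon as at least $f+1$ triples $(k,w,pk)\in key2\_proofs$ satisfy $k3\le pk$ or ($k3\le k$ and $w=v3$); once $|suggestions|\ge n-f$, send-upon-join $\langle propose,k,w,v\rangle$ for $(k,w)\in suggestions$ with maximal $k$. Message processing: upon first $\langle proof,k1,v1,pk1,v\rangle$ from a party, if $v>k1>pk1$ add $(k1,v1,pk1)$ to $proofs$. Upon first $\langle propose,key,val,v\rangle$ from $p$: if $lock=0$ or $val=lock\_val$, send-upon-join $\langle echo,val,v\rangle$; else if $v>key\ge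 lock$, then once at least $f+1$ triples $(k,w,pk)\in proofs$ satisfy $lock\le pk$ or ($lock\le k$ and $w\ne lock\_val$), send-upon-join $\langle echo,val,v\rangle$. Upon $\langle echo,val,v\rangle$ from $n-f$ parties with the same $val$: send-upon-join $\langle key1,val,v\rangle$; if $key1\_val\ne val$ then $prev\_key1\gets key1$, $key1\_val\gets val$; $key1\gets v$. Upon $\langle key1,val,v\rangle$ from $n-f$ parties (same $val$): send-upon-join $\langle key2,val,v\rangle$; if $key2\_val\ne val$ then $prev\_key2\gets key2$, $key2\_val\gets val$; $key2\gets v$. Upon $\langle key2,val,v\rangle$ from $n-f$ (same $val$): send-upon-join $\langle key3,val,v\rangle$; $key3\gets v$, $key3\_val\gets val$. Upon $\langle key3,val,v\rangle$ from $n-f$ (same $val$): send-upon-join $\langle lock,val,v\rangle$; $lock\gets v$, $lock\_val\gets val$. Upon $\langle lock,val,v\rangle$ from $n-f$ (same $val$): if no $done$ sent yet, send $\langle done,val\rangle$ to all. *)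

theory Defs
  imports Main
begin

text \<open>Parties are 1..n. View numbers and key fields are integers (keys may be -1).\<close>

datatype 'v msg =
    Request int
  | Done 'v
  | Abort int
  | Suggest int 'v int 'v int int   (* key3 key3_val key2 key2_val prev_key2 view *)
  | Proof int 'v int int            (* key1 key1_val prev_key1 view *)
  | Propose int 'v int              (* key val view *)
  | Echo 'v int
  | Key1 'v int
  | Key2 'v int
  | Key3 'v int
  | Lock 'v int

definition parties :: "nat \<Rightarrow> nat set" where
  "parties n = {1..n}"

definition primary :: "nat \<Rightarrow> int \<Rightarrow> nat" where
  "primary n v = nat (v mod int n) + 1"

definition kth_largest :: "nat \<Rightarrow> nat \<Rightarrow> (nat \<Rightarrow> int) \<Rightarrow> int" where
  "kth_largest n k h = rev (sort (map h [1..<n+1])) ! (k - 1)"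

definition supports :: "int \<Rightarrow> 'v \<Rightarrow> int \<Rightarrow> int \<Rightarrow> 'v \<Rightarrow> bool" where
  "supports k w pk L V \<longleftrightarrow> L \<le> pk \<or> (L \<le> k \<and> w \<noteq> V)"

record 'v lst =
  lock :: int
  lock_val :: 'v
  key3 :: int
  key3_val :: 'v
  key2 :: int
  key2_val :: 'v
  prev_key2 :: int
  key1 :: int
  key1_val :: 'v
  prev_key1 :: int
  view :: int
  highest_request :: "nat \<Rightarrow> int"
  highest_abort :: "nat \<Rightarrow> int"
  done_sent :: bool
  decided :: "'v option"
  done_rcv :: "(nat \<times> 'v) set"
  (* per-view state *)
  rcv :: "(nat \<times> 'v msg) set"
  outbox :: "(nat \<times> 'v msg) set"   (* send-upon-join: (recipient, message) *)
  timed_out :: bool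
  key2_proofs :: "(nat \<times> int \<times> 'v \<times> int) set"
  suggestions :: "(nat \<times> int \<times> 'v) set"
  pend_sugg :: "(nat \<times> int \<times> 'v) set"
  proposed :: bool
  proofs :: "(nat \<times> int \<times> 'v \<times> int) set"
  prop_rcvd :: bool
  prop_wait :: "'v option"
  echoed :: bool
  fired :: "(nat \<times> 'v) set"

record 'v gst =
  ls :: "nat \<Rightarrow> 'v lst"
  sent :: "(nat \<times> nat \<times> 'v msg) set"   (* (sender, receiver, message) *)

definition init_lst :: "'v \<Rightarrow> 'v lst" where
  "init_lst x = \<lparr>lock = 0, lock_val = x, key3 = 0, key3_val = x, key2 = 0, key2_val = x,
     prev_key2 = -1, key1 = 0, key1_val = x, prev_key1 = -1, view = 0,
     highest_request = (\<lambda>_. 0), highest_abort = (\<lambda>_. 0), done_sent = False, decided = None,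
     done_rcv = {}, rcv = {}, outbox = {}, timed_out = False, key2_proofs = {},
     suggestions = {}, pend_sugg = {}, proposed = False, proofs = {}, prop_rcvd = False,
     prop_wait = None, echoed = False, fired = {}\<rparr>"

definition to_all :: "nat \<Rightarrow> nat \<Rightarrow> 'v msg \<Rightarrow> (nat \<times> nat \<times> 'v msg) set" where
  "to_all n i m = {(i, k, m) | k. k \<in> parties n}"

definition join_all :: "nat \<Rightarrow> 'v msg \<Rightarrow> (nat \<times> 'v msg) set" where
  "join_all n m = {(k, m) | k. k \<in> parties n}"

text \<open>Local part of entering view v: fresh per-view state; suggest (to the primary) and
  proof (send-upon-join) are scheduled with the current key values.\<close>
definition enter_view :: "nat \<Rightarrow> int \<Rightarrow> 'v lst \<Rightarrow> 'v lst" where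
  "enter_view n v st = st\<lparr>view := v, rcv := {},
     outbox := {(primary n v, Suggest (key3 st) (key3_val st) (key2 st) (key2_val st) (prev_key2 st) v)}
               \<union> join_all n (Proof (key1 st) (key1_val st) (prev_key1 st) v),
     timed_out := False, key2_proofs := {}, suggestions := {}, pend_sugg := {},
     proposed := False, proofs := {}, prop_rcvd := False, prop_wait := None,
     echoed := False, fired := {}\<rparr>"

definition init :: "nat \<Rightarrow> nat set \<Rightarrow> (nat \<Rightarrow> 'v) \<Rightarrow> 'v gst" where
  "init n F x = \<lparr>ls = (\<lambda>i. enter_view n 0 (init_lst (x i))),
                 sent = (\<Union>i \<in> parties n - F. to_all n i (Request 0))\<rparr>"

text \<open>Background rule B4 upon abort v from j (assuming highest_abort[j] < v).\<close>
definition abort_handler :: "nat \<Rightarrow> nat \<Rightarrow> nat \<Rightarrow> nat \<Rightarrow> int \<Rightarrow> 'v lst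
     \<Rightarrow> 'v lst \<times> (nat \<times> nat \<times> 'v msg) set" where
  "abort_handler n f i j v st =
    (let h = (highest_abort st)(j := v);
         u = kth_largest n (f + 1) h;
         h2 = (if u > h i then h(i := u) else h);
         out = (if u > h i then to_all n i (Abort u) else {});
         w = kth_largest n (n - f) h2;
         st1 = st\<lparr>highest_abort := h2\<rparr>
     in if w \<ge> view st1 then (enter_view n (w + 1) st1, out \<union> to_all n i (Request (w + 1)))
        else (st1, out))"

definition upd :: "'v gst \<Rightarrow> nat \<Rightarrow> 'v lst \<Rightarrow> (nat \<times> nat \<times> 'v msg) set \<Rightarrow> 'v gst" where
  "upd s i st M = s\<lparr>ls := (ls s)(i := st), sent := sent s \<union> M\<rparr>"

text \<open>Nonfaulty i can receive m from j if j sent it to i, or if j is Byzantine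
  (Byzantine parties can send anything; channels are authenticated).\<close>
definition can_recv :: "nat \<Rightarrow> nat set \<Rightarrow> 'v gst \<Rightarrow> nat \<Rightarrow> nat \<Rightarrow> 'v msg \<Rightarrow> bool" where
  "can_recv n F s j i m \<longleftrightarrow> j \<in> parties n \<and> ((j, i, m) \<in> sent s \<or> j \<in> F)"

definition cnt :: "nat \<Rightarrow> (nat \<Rightarrow> bool) \<Rightarrow> nat" where
  "cnt n P = card {j \<in> parties n. P j}"

fun is_suggest :: "'v msg \<Rightarrow> bool" where
  "is_suggest (Suggest _ _ _ _ _ _) = True" | "is_suggest _ = False"

fun is_proof :: "'v msg \<Rightarrow> bool" where
  "is_proof (Proof _ _ _ _) = True" | "is_proof _ = False"

inductive step :: "nat \<Rightarrow> nat \<Rightarrow> nat set \<Rightarrow> 'v gst \<Rightarrow> 'v gst \<Rightarrow> bool"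
  for n f F where
  recv_request: "\<lbrakk> i \<in> parties n - F; st = ls s i; decided st = None;
      can_recv n F s j i (Request v) \<rbrakk> \<Longrightarrow>
      step n f F s (upd s i (st\<lparr>highest_request := (highest_request st)(j := max (highest_request st j) v)\<rparr>) {})"
| recv_done: "\<lbrakk> i \<in> parties n - F; st = ls s i; decided st = None;
      can_recv n F s j i (Done val) \<rbrakk> \<Longrightarrow>
      step n f F s (upd s i (st\<lparr>done_rcv := insert (j, val) (done_rcv st)\<rparr>) {})"
| recv_abort: "\<lbrakk> i \<in> parties n - F; st = ls s i; decided st = None;
      can_recv n F s j i (Abort v); highest_abort st j < v;
      abort_handler n f i j v st = (st', M) \<rbrakk> \<Longrightarrow>
      step n f F s (upd s i st' M)"
| recv_suggest: "\<lbrakk> i \<in> parties n - F; st = ls s i; decided st = None;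
      can_recv n F s j i (Suggest k3 v3 k2 v2 pk2 v); v = view st; i = primary n v;
      \<not> (\<exists>m. (j, m) \<in> rcv st \<and> is_suggest m) \<rbrakk> \<Longrightarrow>
      step n f F s (upd s i (st\<lparr>rcv := insert (j, Suggest k3 v3 k2 v2 pk2 v) (rcv st),
         key2_proofs := (if pk2 < k2 \<and> k2 < v then insert (j, k2, v2, pk2) (key2_proofs st) else key2_proofs st),
         suggestions := (if k3 = 0 then insert (j, k3, v3) (suggestions st) else suggestions st),
         pend_sugg := (if k3 \<noteq> 0 \<and> k3 < v then insert (j, k3, v3) (pend_sugg st) else pend_sugg st)\<rparr>) {})"
| recv_proof: "\<lbrakk> i \<in> parties n - F; st = ls s i; decided st = None;
      can_recv n F s j i (Proof k1 v1 pk1 v); v = view st;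
      \<not> (\<exists>m. (j, m) \<in> rcv st \<and> is_proof m) \<rbrakk> \<Longrightarrow>
      step n f F s (upd s i (st\<lparr>rcv := insert (j, Proof k1 v1 pk1 v) (rcv st),
         proofs := (if v > k1 \<and> k1 > pk1 then insert (j, k1, v1, pk1) (proofs st) else proofs st)\<rparr>) {})"
| recv_propose: "\<lbrakk> i \<in> parties n - F; st = ls s i; decided st = None;
      can_recv n F s j i (Propose key val v); v = view st; j = primary n v; \<not> prop_rcvd st \<rbrakk> \<Longrightarrow>
      step n f F s (upd s i
        (if lock st = 0 \<or> val = lock_val st
         then st\<lparr>prop_rcvd := True, echoed := True, outbox := outbox st \<union> join_all n (Echo val v)\<rparr>
         else if v > key \<and> key \<ge> lock st
         then st\<lparr>prop_rcvd := True, prop_wait := Some val\<rparr>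
         else st\<lparr>prop_rcvd := True\<rparr>) {})"
| recv_vote: "\<lbrakk> i \<in> parties n - F; st = ls s i; decided st = None; can_recv n F s j i m;
      m \<in> {Echo val (view st), Key1 val (view st), Key2 val (view st), Key3 val (view st), Lock val (view st)} \<rbrakk> \<Longrightarrow>
      step n f F s (upd s i (st\<lparr>rcv := insert (j, m) (rcv st)\<rparr>) {})"
| echo_wait: "\<lbrakk> i \<in> parties n - F; st = ls s i; decided st = None;
      prop_wait st = Some val; \<not> echoed st;
      card {p \<in> proofs st. case p of (_, k, w, pk) \<Rightarrow> supports k w pk (lock st) (lock_val st)} \<ge> f + 1 \<rbrakk> \<Longrightarrow>
      step n f F s (upd s i (st\<lparr>echoed := True, outbox := outbox st \<union> join_all n (Echo val (view st))\<rparr>) {})"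
| got_echoes: "\<lbrakk> i \<in> parties n - F; st = ls s i; decided st = None; (1, val) \<notin> fired st;
      cnt n (\<lambda>j. (j, Echo val (view st)) \<in> rcv st) \<ge> n - f \<rbrakk> \<Longrightarrow>
      step n f F s (upd s i (st\<lparr>fired := insert (1, val) (fired st),
         outbox := outbox st \<union> join_all n (Key1 val (view st)),
         prev_key1 := (if key1_val st \<noteq> val then key1 st else prev_key1 st),
         key1_val := val, key1 := view st\<rparr>) {})"
| got_key1: "\<lbrakk> i \<in> parties n - F; st = ls s i; decided st = None; (2, val) \<notin> fired st;
      cnt n (\<lambda>j. (j, Key1 val (view st)) \<in> rcv st) \<ge> n - f \<rbrakk> \<Longrightarrow>
      step n f F s (upd s i (st\<lparr>fired := insert (2, val) (fired st),
         outbox := outbox st \<union> join_all n (Key2 val (view st)),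
         prev_key2 := (if key2_val st \<noteq> val then key2 st else prev_key2 st),
         key2_val := val, key2 := view st\<rparr>) {})"
| got_key2: "\<lbrakk> i \<in> parties n - F; st = ls s i; decided st = None; (3, val) \<notin> fired st;
      cnt n (\<lambda>j. (j, Key2 val (view st)) \<in> rcv st) \<ge> n - f \<rbrakk> \<Longrightarrow>
      step n f F s (upd s i (st\<lparr>fired := insert (3, val) (fired st),
         outbox := outbox st \<union> join_all n (Key3 val (view st)),
         key3 := view st, key3_val := val\<rparr>) {})"
| got_key3: "\<lbrakk> i \<in> parties n - F; st = ls s i; decided st = None; (4, val) \<notin> fired st;
      cnt n (\<lambda>j. (j, Key3 val (view st)) \<in> rcv st) \<ge> n - f \<rbrakk> \<Longrightarrow>
      step n f F s (upd s i (st\<lparr>fired := insert (4, val) (fired st),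
         outbox := outbox st \<union> join_all n (Lock val (view st)),
         lock := view st, lock_val := val\<rparr>) {})"
| got_lock: "\<lbrakk> i \<in> parties n - F; st = ls s i; decided st = None; \<not> done_sent st;
      cnt n (\<lambda>j. (j, Lock val (view st)) \<in> rcv st) \<ge> n - f \<rbrakk> \<Longrightarrow>
      step n f F s (upd s i (st\<lparr>done_sent := True\<rparr>) (to_all n i (Done val)))"
| suggest_wait: "\<lbrakk> i \<in> parties n - F; st = ls s i; decided st = None; (j, k3, v3) \<in> pend_sugg st;
      card {t \<in> key2_proofs st. case t of (_, k, w, pk) \<Rightarrow> k3 \<le> pk \<or> (k3 \<le> k \<and> w = v3)} \<ge> f + 1 \<rbrakk> \<Longrightarrow>
      step n f F s (upd s i (st\<lparr>pend_sugg := pend_sugg st - {(j, k3, v3)},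
         suggestions := insert (j, k3, v3) (suggestions st)\<rparr>) {})"
| propose: "\<lbrakk> i \<in> parties n - F; st = ls s i; decided st = None; i = primary n (view st);
      \<not> proposed st; card (suggestions st) \<ge> n - f; (j, k, w) \<in> suggestions st;
      \<forall>(j', k', w') \<in> suggestions st. k' \<le> k \<rbrakk> \<Longrightarrow>
      step n f F s (upd s i (st\<lparr>proposed := True,
         outbox := outbox st \<union> join_all n (Propose k w (view st))\<rparr>) {})"
| done_amplify: "\<lbrakk> i \<in> parties n - F; st = ls s i; decided st = None; \<not> done_sent st;
      cnt n (\<lambda>j. (j, val) \<in> done_rcv st) \<ge> f + 1 \<rbrakk> \<Longrightarrow>
      step n f F s (upd s i (st\<lparr>done_sent := True\<rparr>) (to_all n i (Done val)))"
| decide: "\<lbrakk> i \<in> parties n - F; st = ls s i; decided st = None;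
      cnt n (\<lambda>j. (j, val) \<in> done_rcv st) \<ge> n - f \<rbrakk> \<Longrightarrow>
      step n f F s (upd s i (st\<lparr>decided := Some val\<rparr>) {})"
| timeout: "\<lbrakk> i \<in> parties n - F; st = ls s i; decided st = None; \<not> timed_out st \<rbrakk> \<Longrightarrow>
      step n f F s (upd s i (st\<lparr>timed_out := True\<rparr>) (to_all n i (Abort (view st))))"
| send: "\<lbrakk> i \<in> parties n - F; st = ls s i; decided st = None; (k, m) \<in> outbox st;
      highest_request st k = view st \<rbrakk> \<Longrightarrow>
      step n f F s (upd s i st {(i, k, m)})"

definition reachable :: "nat \<Rightarrow> nat \<Rightarrow> nat set \<Rightarrow> (nat \<Rightarrow> 'v) \<Rightarrow> 'v gst \<Rightarrow> bool" where
  "reachable n f F x s \<longleftrightarrow> (step n f F)\<^sup>*\<^sup>* (init n F x) s"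

end

theory Submission
  imports Defs
begin

definition P1 :: "'v lst \<Rightarrow> int \<Rightarrow> 'v \<Rightarrow> bool" where
  "P1 st v w \<longleftrightarrow> v \<le> key1 st \<and> (key1_val st = w \<or> v \<le> prev_key1 st)"

definition Gq :: "nat \<Rightarrow> nat \<Rightarrow> nat set \<Rightarrow> 'v gst \<Rightarrow> int \<Rightarrow> 'v \<Rightarrow> bool" where
  "Gq n f F s v w \<longleftrightarrow> f + 1 \<le> card {k \<in> parties n - F. P1 (ls s k) v w}"

definition linv :: "nat \<Rightarrow> nat \<Rightarrow> nat set \<Rightarrow> 'v gst \<Rightarrow> nat \<Rightarrow> 'v lst \<Rightarrow> bool" where
  "linv n f F s k st \<longleftrightarrow> prev_key1 st \<le> key1 st \<and> key1 st \<le> view st \<and> key2 st \<le> view st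
   \<and> (\<forall>r w v. (r, Key1 w v) \<in> outbox st \<longrightarrow> P1 st v w)
   \<and> (\<forall>r m. (r, m) \<in> rcv st \<longrightarrow> r \<in> parties n \<and> ((r, k, m) \<in> sent s \<or> r \<in> F))
   \<and> (0 < key2 st \<longrightarrow> Gq n f F s (key2 st) (key2_val st))
   \<and> (0 < prev_key2 st \<longrightarrow> (\<exists>w1 w2 v2. w1 \<noteq> w2 \<and> prev_key2 st \<le> v2
          \<and> Gq n f F s (prev_key2 st) w1 \<and> Gq n f F s v2 w2))"

definition Inv :: "nat \<Rightarrow> nat \<Rightarrow> nat set \<Rightarrow> 'v gst \<Rightarrow> bool" where
  "Inv n f F s \<longleftrightarrow> (\<forall>k \<in> parties n - F. linv n f F s k (ls s k))
     \<and> (\<forall>k r w v. (k, r, Key1 w v) \<in> sent s \<longrightarrow> k \<in> parties n - F \<longrightarrow> P1 (ls s k) v w)"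

lemma Gq_upd:
  assumes "\<forall>v w. P1 (ls s i) v w \<longrightarrow> P1 st' v w" "Gq n f F s v w"
  shows "Gq n f F (upd s i st' M) v w"
proof -
  have "{k \<in> parties n - F. P1 (ls s k) v w} \<subseteq> {k \<in> parties n - F. P1 (ls (upd s i st' M) k) v w}"
    using assms(1) by (auto simp: upd_def)
  moreover have "finite {k \<in> parties n - F. P1 (ls (upd s i st' M) k) v w}"
    by (auto simp: parties_def)
  ultimately show ?thesis using assms(2) unfolding Gq_def by (meson card_mono order_trans)
qed

lemma preserve_generic:
  assumes I: "Inv n f F s" and i: "i \<in> parties n - F" and s': "s' = upd s i st' M"
    and mono: "\<forall>v w. P1 (ls s i) v w \<longrightarrow> P1 st' v w"
    and a1: "prev_key1 st' \<le> key1 st'" and a2: "key1 st' \<le> view st'" and a3: "key2 st' \<le> view st'"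
    and a4: "\<forall>r w v. (r, Key1 w v) \<in> outbox st' \<longrightarrow> P1 st' v w"
    and a5: "\<forall>r m. (r, m) \<in> rcv st' \<longrightarrow> r \<in> parties n \<and> ((r, i, m) \<in> sent s \<or> (r, i, m) \<in> M \<or> r \<in> F)"
    and a6: "0 < key2 st' \<longrightarrow> Gq n f F s (key2 st') (key2_val st')"
    and a7: "0 < prev_key2 st' \<longrightarrow> (\<exists>w1 w2 v2. w1 \<noteq> w2 \<and> prev_key2 st' \<le> v2
          \<and> Gq n f F s (prev_key2 st') w1 \<and> Gq n f F s v2 w2)"
    and msgs: "\<forall>a r w v. (a, r, Key1 w v) \<in> M \<longrightarrow> a = i \<and> P1 st' v w"
  shows "Inv n f F s'"
proof -
  have G: "Gq n f F s v w \<Longrightarrow> Gq n f F s' v w" for v w using Gq_upd[OF mono] s' by blast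
  have sent': "sent s' = sent s \<union> M" using s' by (simp add: upd_def)
  have ls': "ls s' = (ls s)(i := st')" using s' by (simp add: upd_def)
  have L1: "linv n f F s' i st'"
    unfolding linv_def using a1 a2 a3 a4 a5 a6 a7 G sent' by blast
  have L2: "linv n f F s' k (ls s k)" if "k \<in> parties n - F" for k
  proof -
    have "linv n f F s k (ls s k)" using I that by (simp add: Inv_def)
    then show ?thesis unfolding linv_def using G sent' by blast
  qed
  have L3: "P1 (ls s' k) v w" if "(k, r, Key1 w v) \<in> sent s'" "k \<in> parties n - F" for k r w v
  proof (cases "(k, r, Key1 w v) \<in> M")
    case True then show ?thesis using msgs ls' by auto
  next
    case False
    then have "(k, r, Key1 w v) \<in> sent s" using that sent' by auto
    then have "P1 (ls s k) v w" using I that by (auto simp: Inv_def)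
    then show ?thesis using mono ls' by auto
  qed
  show ?thesis unfolding Inv_def using L1 L2 L3 ls' by auto
qed


lemma abort_handler_props:
  assumes "abort_handler n f i j v st = (st', M)"
  shows "key1 st' = key1 st \<and> key1_val st' = key1_val st \<and> prev_key1 st' = prev_key1 st
    \<and> key2 st' = key2 st \<and> key2_val st' = key2_val st \<and> prev_key2 st' = prev_key2 st
    \<and> view st \<le> view st'
    \<and> (\<forall>r w u. (r, Key1 w u) \<in> outbox st' \<longrightarrow> (r, Key1 w u) \<in> outbox st)
    \<and> rcv st' \<subseteq> rcv st
    \<and> (\<forall>a b w u. (a, b, Key1 w u) \<notin> M)"
  using assms unfolding abort_handler_def Let_def enter_view_def
  by (auto simp: join_all_def to_all_def split: if_splits)

lemma quorum_G:
  assumes I: "Inv n f F s" and j: "j \<in> parties n - F"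
    and c: "cnt n (\<lambda>k. (k, Key1 val v) \<in> rcv (ls s j)) \<ge> n - f"
    and f: "card F \<le> f" "3 * f < n" "F \<subseteq> parties n"
  shows "Gq n f F s v val"
proof -
  let ?A = "{k \<in> parties n. (k, Key1 val v) \<in> rcv (ls s j)}"
  have fin: "finite (parties n)" by (simp add: parties_def)
  have lj: "linv n f F s j (ls s j)" using I j by (simp add: Inv_def)
  have sub: "?A - F \<subseteq> {k \<in> parties n - F. P1 (ls s k) v val}"
  proof
    fix k assume k: "k \<in> ?A - F"
    then have "(k, j, Key1 val v) \<in> sent s" using lj unfolding linv_def by blast
    then show "k \<in> {k \<in> parties n - F. P1 (ls s k) v val}" using I k by (auto simp: Inv_def)
  qed
  have "card ?A \<le> card (?A - F) + card F"
  proof -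
    have "?A \<subseteq> (?A - F) \<union> F" by blast
    then have "card ?A \<le> card ((?A - F) \<union> F)"
      by (rule card_mono[rotated]) (use fin f(3) finite_subset in auto)
    also have "\<dots> \<le> card (?A - F) + card F" by (rule card_Un_le)
    finally show ?thesis .
  qed
  moreover have "card ?A \<ge> n - f" using c by (simp add: cnt_def)
  moreover have "card (?A - F) \<le> card {k \<in> parties n - F. P1 (ls s k) v val}"
    by (rule card_mono) (use fin sub in auto)
  ultimately show ?thesis unfolding Gq_def using f by linarith
qed

lemma Inv_init: "Inv n f F (init n F x)"
  unfolding Inv_def linv_def init_def enter_view_def init_lst_def
  by (auto simp: join_all_def to_all_def)


lemma preserve_simple:
  assumes I: "Inv n f F s" and i: "i \<in> parties n - F" and s': "s' = upd s i st' M"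
    and st: "st = ls s i"
    and e: "key1 st' = key1 st" "key1_val st' = key1_val st" "prev_key1 st' = prev_key1 st"
      "key2 st' = key2 st" "key2_val st' = key2_val st" "prev_key2 st' = prev_key2 st"
      "view st \<le> view st'"
    and ob: "\<forall>r w v. (r, Key1 w v) \<in> outbox st' \<longrightarrow> (r, Key1 w v) \<in> outbox st"
    and rc: "\<forall>r m. (r, m) \<in> rcv st' \<longrightarrow> (r, m) \<in> rcv st \<or> can_recv n F s r i m"
    and msgs: "\<forall>a r w v. (a, r, Key1 w v) \<notin> M"
  shows "Inv n f F s'"
proof -
  have L: "linv n f F s i st" using I i st by (simp add: Inv_def)
  have P: "P1 st' v w = P1 st v w" for v w using e by (simp add: P1_def)
  show ?thesis
  proof (rule preserve_generic[OF I i s'])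
    show "\<forall>v w. P1 (ls s i) v w \<longrightarrow> P1 st' v w" using P st by simp
    show "prev_key1 st' \<le> key1 st'" "key1 st' \<le> view st'" "key2 st' \<le> view st'"
      using L e unfolding linv_def by auto
    show "\<forall>r w v. (r, Key1 w v) \<in> outbox st' \<longrightarrow> P1 st' v w"
      using L ob P unfolding linv_def by blast
    show "\<forall>r m. (r, m) \<in> rcv st' \<longrightarrow> r \<in> parties n \<and> ((r, i, m) \<in> sent s \<or> (r, i, m) \<in> M \<or> r \<in> F)"
      using L rc unfolding linv_def can_recv_def by blast
    show "0 < key2 st' \<longrightarrow> Gq n f F s (key2 st') (key2_val st')"
      "0 < prev_key2 st' \<longrightarrow> (\<exists>w1 w2 v2. w1 \<noteq> w2 \<and> prev_key2 st' \<le> v2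
          \<and> Gq n f F s (prev_key2 st') w1 \<and> Gq n f F s v2 w2)"
      using L e unfolding linv_def by auto
    show "\<forall>a r w v. (a, r, Key1 w v) \<in> M \<longrightarrow> a = i \<and> P1 st' v w" using msgs by blast
  qed
qed

lemma Inv_step:
  assumes st: "step n f F s s'" and I: "Inv n f F s" and f: "card F \<le> f" "3 * f < n" "F \<subseteq> parties n"
  shows "Inv n f F s'"
  using st
proof (cases rule: step.cases)
  case (recv_request i st j v)
  show ?thesis
    by (rule preserve_simple[OF I _ recv_request(1), where st=st]) (use recv_request(2,3,5) in \<open>auto simp: join_all_def to_all_def\<close>)
next
  case (recv_done i st j val)
  show ?thesis
    by (rule preserve_simple[OF I _ recv_done(1), where st=st]) (use recv_done(2,3,5) in \<open>auto simp: join_all_def to_all_def\<close>)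
next
  case (recv_suggest i st j k3 v3 k2 v2 pk2 v)
  show ?thesis
    by (rule preserve_simple[OF I _ recv_suggest(1), where st=st]) (use recv_suggest(2,3,5) in \<open>auto simp: join_all_def to_all_def\<close>)
next
  case (recv_proof i st j k1 v1 pk1 v)
  show ?thesis
    by (rule preserve_simple[OF I _ recv_proof(1), where st=st]) (use recv_proof(2,3,5) in \<open>auto simp: join_all_def to_all_def\<close>)
next
  case (recv_propose i st j key val v)
  show ?thesis
    by (rule preserve_simple[OF I _ recv_propose(1), where st=st]) (use recv_propose(2,3) in \<open>auto simp: join_all_def to_all_def\<close>)
next
  case (recv_vote i st j m val)
  show ?thesis
    by (rule preserve_simple[OF I _ recv_vote(1), where st=st]) (use recv_vote(2,3,5) in \<open>auto simp: join_all_def to_all_def\<close>)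
next
  case (echo_wait i st val)
  show ?thesis
    by (rule preserve_simple[OF I _ echo_wait(1), where st=st]) (use echo_wait(2,3) in \<open>auto simp: join_all_def to_all_def\<close>)
next
  case (got_key2 i st val)
  show ?thesis
    by (rule preserve_simple[OF I _ got_key2(1), where st=st]) (use got_key2(2,3) in \<open>auto simp: join_all_def to_all_def\<close>)
next
  case (got_key3 i st val)
  show ?thesis
    by (rule preserve_simple[OF I _ got_key3(1), where st=st]) (use got_key3(2,3) in \<open>auto simp: join_all_def to_all_def\<close>)
next
  case (got_lock i st val)
  show ?thesis
    by (rule preserve_simple[OF I _ got_lock(1), where st=st]) (use got_lock(2,3) in \<open>auto simp: join_all_def to_all_def\<close>)
next
  case (suggest_wait i st j k3 v3)
  show ?thesis
    by (rule preserve_simple[OF I _ suggest_wait(1), where st=st]) (use suggest_wait(2,3) in \<open>auto simp: join_all_def to_all_def\<close>)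
next
  case (propose i st j k w)
  show ?thesis
    by (rule preserve_simple[OF I _ propose(1), where st=st]) (use propose(2,3) in \<open>auto simp: join_all_def to_all_def\<close>)
next
  case (done_amplify i st val)
  show ?thesis
    by (rule preserve_simple[OF I _ done_amplify(1), where st=st]) (use done_amplify(2,3) in \<open>auto simp: join_all_def to_all_def\<close>)
next
  case (decide i st val)
  show ?thesis
    by (rule preserve_simple[OF I _ decide(1), where st=st]) (use decide(2,3) in \<open>auto simp: join_all_def to_all_def\<close>)
next
  case (timeout i st)
  show ?thesis
    by (rule preserve_simple[OF I _ timeout(1), where st=st]) (use timeout(2,3) in \<open>auto simp: join_all_def to_all_def\<close>)
next
  case (send i st k m)
  then have L: "linv n f F s i st" using I by (simp add: Inv_def)
  show ?thesis
    by (rule preserve_generic[OF I _ send(1)]) (use L send(2-) in \<open>auto simp: linv_def\<close>)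
next
  case (recv_abort i st j v st' M)
  then have L: "linv n f F s i st" using I by (simp add: Inv_def)
  have A: "key1 st' = key1 st \<and> key1_val st' = key1_val st \<and> prev_key1 st' = prev_key1 st
    \<and> key2 st' = key2 st \<and> key2_val st' = key2_val st \<and> prev_key2 st' = prev_key2 st
    \<and> view st \<le> view st'
    \<and> (\<forall>r w u. (r, Key1 w u) \<in> outbox st' \<longrightarrow> (r, Key1 w u) \<in> outbox st)
    \<and> rcv st' \<subseteq> rcv st
    \<and> (\<forall>a b w u. (a, b, Key1 w u) \<notin> M)"
    by (rule abort_handler_props) (use recv_abort in simp)
  show ?thesis
    by (rule preserve_simple[OF I _ recv_abort(1), where st=st]) (use A recv_abort(2,3) in auto)
next
  case (got_echoes i st val)
  then have L: "linv n f F s i st" using I by (simp add: Inv_def)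
  let ?st' = "st\<lparr>fired := insert (1, val) (fired st),
         outbox := outbox st \<union> join_all n (Key1 val (view st)),
         prev_key1 := (if key1_val st \<noteq> val then key1 st else prev_key1 st),
         key1_val := val, key1 := view st\<rparr>"
  have mono: "\<forall>v w. P1 st v w \<longrightarrow> P1 ?st' v w"
    using L unfolding linv_def P1_def by auto
  have new: "P1 ?st' (view st) val" by (simp add: P1_def)
  show ?thesis
    apply (rule preserve_generic[OF I _ got_echoes(1)])
    using L got_echoes mono new by (auto simp: linv_def join_all_def)
next
  case (got_key1 i st val)
  then have L: "linv n f F s i st" using I by (simp add: Inv_def)
  have G: "Gq n f F s (view st) val"
    by (rule quorum_G[OF I got_key1(2)]) (use got_key1 f in auto)
  show ?thesis
    apply (rule preserve_generic[OF I _ got_key1(1)])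
    using L got_key1 G by (auto simp: linv_def P1_def join_all_def)
qed

lemma Inv_reach:
  assumes "reachable n f F x s" "card F \<le> f" "3 * f < n" "F \<subseteq> parties n"
  shows "Inv n f F s"
proof -
  have "(step n f F)\<^sup>*\<^sup>* (init n F x) s" using assms(1) by (simp add: reachable_def)
  then show ?thesis
  proof (induction rule: rtranclp_induct)
    case base then show ?case by (rule Inv_init)
  next
    case (step y z) then show ?case using Inv_step[OF _ _ assms(2-4)] by blast
  qed
qed

lemma Gq_support:
  assumes "Gq n f F s vv w" "L \<le> vv" "w \<noteq> V"
  shows "\<exists>S \<subseteq> parties n - F. card S = f + 1 \<and>
           (\<forall>k \<in> S. supports (key1 (ls s k)) (key1_val (ls s k)) (prev_key1 (ls s k)) L V)"
proof -
  let ?T = "{k \<in> parties n - F. P1 (ls s k) vv w}"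
  have "f + 1 \<le> card ?T" using assms(1) by (simp add: Gq_def)
  then obtain S where S: "S \<subseteq> ?T" "card S = f + 1" by (meson obtain_subset_with_card_n)
  have "\<forall>k \<in> S. supports (key1 (ls s k)) (key1_val (ls s k)) (prev_key1 (ls s k)) L V"
  proof
    fix k assume "k \<in> S"
    then have "P1 (ls s k) vv w" using S(1) by blast
    then show "supports (key1 (ls s k)) (key1_val (ls s k)) (prev_key1 (ls s k)) L V"
      using assms(2,3) unfolding P1_def supports_def by auto
  qed
  then show ?thesis using S by blast
qed

theorem lemma2p10:
  fixes n f :: nat and F :: "nat set" and x :: "nat \<Rightarrow> 'v" and s :: "'v gst" and i j :: nat
  assumes "3 * f < n" and "F \<subseteq> parties n" and "card F \<le> f"
    and "reachable n f F x s"
    and "i \<in> parties n - F" and "lock (ls s i) > 0"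
    and "j \<in> parties n - F"
    and "prev_key2 (ls s j) \<ge> lock (ls s i)
         \<or> (key2 (ls s j) \<ge> lock (ls s i) \<and> key2_val (ls s j) \<noteq> lock_val (ls s i))"
  shows "\<exists>S \<subseteq> parties n - F. card S = f + 1 \<and>
           (\<forall>k \<in> S. supports (key1 (ls s k)) (key1_val (ls s k)) (prev_key1 (ls s k))
                              (lock (ls s i)) (lock_val (ls s i)))"
proof -
  have I: "Inv n f F s" using Inv_reach assms(1-4) by blast
  have L: "linv n f F s j (ls s j)" using I assms(7) by (simp add: Inv_def)
  show ?thesis
  proof (cases "prev_key2 (ls s j) \<ge> lock (ls s i)")
    case True
    then have "0 < prev_key2 (ls s j)" using assms(6) by linarith
    then obtain w1 w2 v2 where w: "w1 \<noteq> w2" "prev_key2 (ls s j) \<le> v2"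
      "Gq n f F s (prev_key2 (ls s j)) w1" "Gq n f F s v2 w2"
      using L unfolding linv_def by blast
    show ?thesis
    proof (cases "w1 = lock_val (ls s i)")
      case True
      then have "w2 \<noteq> lock_val (ls s i)" using w(1) by simp
      moreover have "lock (ls s i) \<le> v2" using w(2) \<open>prev_key2 (ls s j) \<ge> lock (ls s i)\<close> by linarith
      ultimately show ?thesis by (rule Gq_support[OF w(4), rotated])
    next
      case False
      then show ?thesis by (rule Gq_support[OF w(3) \<open>prev_key2 (ls s j) \<ge> lock (ls s i)\<close>])
    qed
  next
    case False
    then have k: "key2 (ls s j) \<ge> lock (ls s i)" "key2_val (ls s j) \<noteq> lock_val (ls s i)"
      using assms(8) by auto
    then have "0 < key2 (ls s j)" using assms(6) by linarith
    then have "Gq n f F s (key2 (ls s j)) (key2_val (ls s j))" using L unfolding linv_def by blast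
    then show ?thesis by (rule Gq_support[OF _ k(1) k(2)])
  qed
qed

end
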